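(* Let $d\ge2$ be an integer, $B>1$ and $0<s<1$. Then $$\sup_{1\le\alpha_1\le\cdots\le\alpha_{d-1}\le B}\min\Big\{\alpha_1^{-s},\ \big(\alpha_1^{1-s}\alpha_2^{-s}\big)^{1/2},\ \dots,\ \big(\alpha_{k-1}^{1-s}\alpha_k^{-s}\big)^{1/k},\ \dots,\ \big(\alpha_{d-1}^{1-s}B^{-s}\big)^{1/d}\Big\}=B^{-g_d(s)},$$ where the terms in the minimum are $\alpha_1^{-s}$, the terms $(\alpha_{k-1}^{1-s}\alpha_k^{-s})^{1/k}$ for $2\le k\le d-1$, and $(\alpha_{d-1}^{1-s}B^{-s})^{1/d}$; moreover the supremum is attained at the point where all the terms in the minimum are equal.
   Context: Functions $g_n:[0,1]\to\mathbb R$: $g_1(s)=s$, $g_n(s)=\frac{s\,g_{n-1}(s)}{1-s+n\,g_{n-1}(s)}$ for $n\ge2$. *)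

theory Defs
  imports Complex_Main
begin

fun g :: "nat \<Rightarrow> real \<Rightarrow> real" where
  "g 0 s = 0"
| "g (Suc 0) s = s"
| "g (Suc (Suc n)) s = s * g (Suc n) s / (1 - s + real (Suc (Suc n)) * g (Suc n) s)"

definition admissible :: "nat \<Rightarrow> real \<Rightarrow> (nat \<Rightarrow> real) \<Rightarrow> bool" where
  "admissible d B \<alpha> \<longleftrightarrow>
     1 \<le> \<alpha> 1 \<and> (\<forall>k. 1 \<le> k \<and> k < d - 1 \<longrightarrow> \<alpha> k \<le> \<alpha> (Suc k)) \<and> \<alpha> (d - 1) \<le> B"

definition mterm :: "nat \<Rightarrow> real \<Rightarrow> real \<Rightarrow> (nat \<Rightarrow> real) \<Rightarrow> nat \<Rightarrow> real" where
  "mterm d B s \<alpha> k =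
     (if k = 1 then \<alpha> 1 powr (- s)
      else if k = d then (\<alpha> (d - 1) powr (1 - s) * B powr (- s)) powr (1 / real d)
      else (\<alpha> (k - 1) powr (1 - s) * \<alpha> k powr (- s)) powr (1 / real k))"

definition minval :: "nat \<Rightarrow> real \<Rightarrow> real \<Rightarrow> (nat \<Rightarrow> real) \<Rightarrow> real" where
  "minval d B s \<alpha> = Min ((\<lambda>k. mterm d B s \<alpha> k) ` {1..d})"

end

theory Submission
  imports Defs
begin

fun aa :: "real \<Rightarrow> nat \<Rightarrow> real" where
  "aa s 0 = 0"
| "aa s (Suc k) = ((1 - s) * aa s k + real (Suc k)) / s"

lemma aa_Suc_eq: assumes "0 < s" shows "s * aa s (Suc k) = (1 - s) * aa s k + real (Suc k)"
  using assms by simp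

lemma aa_diff: assumes "0 < s" "s < 1" shows "aa s (Suc k) > aa s k"
proof (induction k)
  case 0 then show ?case using assms by simp
next
  case (Suc k)
  have "aa s (Suc (Suc k)) - aa s (Suc k) = ((1 - s) * (aa s (Suc k) - aa s k) + 1) / s"
    using assms by (simp add: field_simps)
  moreover have "((1 - s) * (aa s (Suc k) - aa s k) + 1) / s > 0"
    using assms Suc by (intro divide_pos_pos add_nonneg_pos mult_nonneg_nonneg) auto
  ultimately show ?case by linarith
qed

lemma aa_mono: assumes "0 < s" "s < 1" "i \<le> j" shows "aa s i \<le> aa s j"
  using assms(3)
proof (induction j)
  case 0 then show ?case by simp
next
  case (Suc j)
  then show ?case using aa_diff[OF assms(1,2), of j] by (cases "i = Suc j") auto
qed

lemma aa_pos: assumes "0 < s" "s < 1" "k \<ge> 1" shows "aa s k > 0"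
proof -
  have "aa s 1 \<le> aa s k" using aa_mono[OF assms(1,2) assms(3)] .
  moreover have "aa s 1 > 0" using assms by simp
  ultimately show ?thesis by linarith
qed

lemma g_aa: assumes "0 < s" "s < 1" shows "g (Suc n) s = 1 / aa s (Suc n)"
proof (induction n)
  case 0 then show ?case using assms by simp
next
  case (Suc n)
  have p: "aa s (Suc n) > 0" using aa_pos[OF assms, of "Suc n"] by simp
  have "g (Suc (Suc n)) s = s * (1 / aa s (Suc n)) / (1 - s + real (Suc (Suc n)) * (1 / aa s (Suc n)))"
    using Suc by simp
  also have "\<dots> = s / ((1 - s) * aa s (Suc n) + real (Suc (Suc n)))"
    using p assms by (simp add: field_simps del: aa.simps)
  also have "\<dots> = 1 / aa s (Suc (Suc n))"
    unfolding aa_Suc_eq[OF assms(1), of "Suc n", symmetric] using assms by (simp del: aa.simps)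
  finally show ?case .
qed

definition Tm :: "real \<Rightarrow> (nat \<Rightarrow> real) \<Rightarrow> nat \<Rightarrow> real" where
  "Tm s \<beta> k = (if k = 1 then \<beta> 1 powr (-s) else (\<beta> (k-1) powr (1-s) * \<beta> k powr (-s)) powr (1/real k))"

lemma Tm_pos: assumes "k \<noteq> 1 \<Longrightarrow> \<beta> (k-1) > 0" "\<beta> k > 0" shows "Tm s \<beta> k > 0"
  using assms by (cases "k = 1") (auto simp: Tm_def)

lemma ln_Tm: assumes "k \<noteq> 1 \<Longrightarrow> \<beta> (k-1) > 0" "\<beta> k > 0"
  shows "ln (Tm s \<beta> k) = (if k = 1 then - s * ln (\<beta> 1) else ((1-s) * ln (\<beta> (k-1)) - s * ln (\<beta> k)) / real k)"
  using assms by (cases "k = 1") (auto simp: Tm_def ln_powr ln_mult field_simps)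

lemma mterm_Tm: assumes "d \<ge> 2" "k \<in> {1..d}"
  shows "mterm d B s \<alpha> k = Tm s (\<alpha>(d := B)) k"
  using assms by (auto simp: mterm_def Tm_def)

lemma ub_aux:
  assumes s: "0 < s" "s < 1"
    and h: "\<forall>j\<in>{1..n}. (if j = 1 then - s * y 1 else ((1-s) * y (j-1) - s * y j) / real j) > - c"
    and n: "n \<ge> 1"
  shows "y n < c * aa s n"
  using h n
proof (induction n)
  case 0 then show ?case by simp
next
  case (Suc n)
  show ?case
  proof (cases "n = 0")
    case True
    then have "- s * y 1 > - c" using Suc.prems by auto
    then show ?thesis using True s by (simp add: field_simps)
  next
    case False
    then have ih: "y n < c * aa s n" using Suc by auto
    have "((1-s) * y n - s * y (Suc n)) / real (Suc n) > - c" using bspec[OF Suc.prems(1), of "Suc n"] False by auto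
    then have "(1-s) * y n - s * y (Suc n) > - c * real (Suc n)"
      by (simp add: field_simps)
    moreover have "(1-s) * y n < (1-s) * (c * aa s n)" using ih s by simp
    ultimately have "s * y (Suc n) < c * (s * aa s (Suc n))"
      using s unfolding aa_Suc_eq[OF s(1)] by (simp add: algebra_simps del: aa.simps)
    then show ?thesis using s by (simp del: aa.simps)
  qed
qed

lemma eq_aux:
  assumes s: "0 < s" "s < 1"
    and h: "\<forall>j\<in>{1..n}. (if j = 1 then - s * y 1 else ((1-s) * y (j-1) - s * y j) / real j) = - c"
    and n: "n \<ge> 1"
  shows "y n = c * aa s n"
  using h n
proof (induction n)
  case 0 then show ?case by simp
next
  case (Suc n)
  show ?case
  proof (cases "n = 0")
    case True
    then have "- s * y 1 = - c" using Suc.prems by auto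
    then show ?thesis using True s by (simp add: field_simps)
  next
    case False
    then have ih: "y n = c * aa s n" using Suc by auto
    have "((1-s) * y n - s * y (Suc n)) / real (Suc n) = - c" using bspec[OF Suc.prems(1), of "Suc n"] False by auto
    then have "(1-s) * y n - s * y (Suc n) = - c * real (Suc n)"
      by (simp add: field_simps)
    then have "s * y (Suc n) = c * (s * aa s (Suc n))"
      using s ih unfolding aa_Suc_eq[OF s(1)] by (simp add: algebra_simps del: aa.simps)
    then show ?thesis using s by (simp del: aa.simps)
  qed
qed

lemma adm_ge1: assumes "admissible d B \<alpha>" "1 \<le> j" "j \<le> d - 1" shows "\<alpha> j \<ge> 1"
  using assms(2,3)
proof (induction j)
  case 0 then show ?case by simp
next
  case (Suc j)
  show ?case
  proof (cases "j = 0")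
    case True then show ?thesis using assms(1) by (simp add: admissible_def)
  next
    case False
    then have "\<alpha> j \<ge> 1" using Suc by auto
    moreover have "\<alpha> j \<le> \<alpha> (Suc j)" using assms(1) False Suc.prems by (simp add: admissible_def)
    ultimately show ?thesis by simp
  qed
qed

lemma beta_pos:
  assumes "admissible d B \<alpha>" "d \<ge> 2" "B > 1" "j \<in> {1..d}"
  shows "(\<alpha>(d := B)) j > 0"
proof (cases "j = d")
  case True then show ?thesis using assms by simp
next
  case False
  then have "\<alpha> j \<ge> 1" using adm_ge1[OF assms(1)] assms(4) by auto
  then show ?thesis using False by simp
qed

lemma ln_mterm:
  assumes "admissible d B \<alpha>" "d \<ge> 2" "B > 1" "k \<in> {1..d}"
  shows "ln (mterm d B s \<alpha> k) = (if k = 1 then - s * ln ((\<alpha>(d := B)) 1)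
     else ((1-s) * ln ((\<alpha>(d := B)) (k-1)) - s * ln ((\<alpha>(d := B)) k)) / real k)"
    and "mterm d B s \<alpha> k > 0"
proof -
  have a: "k \<noteq> 1 \<Longrightarrow> (\<alpha>(d := B)) (k-1) > 0"
  proof -
    assume "k \<noteq> 1"
    then have "k - 1 \<in> {1..d}" using assms(4) by auto
    then show ?thesis using beta_pos[OF assms(1-3)] by blast
  qed
  have b: "(\<alpha>(d := B)) k > 0" using beta_pos[OF assms] .
  show "ln (mterm d B s \<alpha> k) = (if k = 1 then - s * ln ((\<alpha>(d := B)) 1)
     else ((1-s) * ln ((\<alpha>(d := B)) (k-1)) - s * ln ((\<alpha>(d := B)) k)) / real k)"
    unfolding mterm_Tm[OF assms(2,4)] by (rule ln_Tm[OF a b])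
  show "mterm d B s \<alpha> k > 0"
    unfolding mterm_Tm[OF assms(2,4)] by (rule Tm_pos[OF a b])
qed

theorem proposition2p8:
  fixes d :: nat and B s :: real
  assumes "d \<ge> 2" and "B > 1" and "0 < s" and "s < 1"
  shows "(SUP \<alpha>\<in>{\<alpha>. admissible d B \<alpha>}. minval d B s \<alpha>) = B powr (- g d s)
       \<and> (\<exists>\<alpha>. admissible d B \<alpha> \<and> (\<forall>k\<in>{1..d}. mterm d B s \<alpha> k = minval d B s \<alpha>))
       \<and> (\<forall>\<alpha>. admissible d B \<alpha> \<and> (\<forall>k\<in>{1..d}. mterm d B s \<alpha> k = minval d B s \<alpha>)
              \<longrightarrow> minval d B s \<alpha> = B powr (- g d s))"
proof -
  define A where "A = aa s d"
  define L where "L = ln B"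
  define v where "v = B powr (- g d s)"
  have Apos: "A > 0" unfolding A_def using aa_pos[OF assms(3,4)] assms(1) by simp
  have Lpos: "L > 0" unfolding L_def using assms(2) by simp
  have gd: "g d s = 1 / A"
    using g_aa[OF assms(3,4), of "d - 1"] assms(1) unfolding A_def by (simp add: Suc_diff_1)
  have vpos: "v > 0" unfolding v_def using assms(2) by simp
  have lnv: "ln v = - (L / A)" unfolding v_def L_def gd by (simp add: ln_powr)
  have fin: "finite ((\<lambda>k. mterm d B s \<alpha> k) ` {1..d})" for \<alpha> by simp
  have bound: "minval d B s \<alpha> \<le> v" if adm: "admissible d B \<alpha>" for \<alpha>
  proof (rule ccontr)
    assume "\<not> minval d B s \<alpha> \<le> v"
    then have gt: "mterm d B s \<alpha> k > v" if "k \<in> {1..d}" for k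
    proof -
      have "mterm d B s \<alpha> k \<in> (\<lambda>k. mterm d B s \<alpha> k) ` {1..d}" using that by blast
      from Min_le[OF fin this] show ?thesis using \<open>\<not> minval d B s \<alpha> \<le> v\<close>
        unfolding minval_def by linarith
    qed
    define y where "y = (\<lambda>j. ln ((\<alpha>(d := B)) j))"
    have "\<forall>j\<in>{1..d}. (if j = 1 then - s * y 1 else ((1-s) * y (j-1) - s * y j) / real j) > - (L / A)"
    proof
      fix j assume j: "j \<in> {1..d}"
      have "ln (mterm d B s \<alpha> j) > ln v" using gt[OF j] vpos by simp
      then show "(if j = 1 then - s * y 1 else ((1-s) * y (j-1) - s * y j) / real j) > - (L / A)"
        using ln_mterm(1)[OF adm assms(1,2) j] lnv unfolding y_def by simp
    qed
    from ub_aux[OF assms(3,4) this] assms(1) have "y d < L / A * A" unfolding A_def by simp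
    then show False using Apos unfolding y_def L_def by simp
  qed
  define \<alpha>0 where "\<alpha>0 = (\<lambda>k. B powr (aa s k / A))"
  have a0d: "\<alpha>0 d = B" unfolding \<alpha>0_def A_def using Apos assms(2) unfolding A_def by simp
  have upd: "\<alpha>0(d := B) = \<alpha>0" using a0d by auto
  have adm0: "admissible d B \<alpha>0"
    unfolding admissible_def
  proof (intro conjI allI impI)
    show "1 \<le> \<alpha>0 1" unfolding \<alpha>0_def
      using aa_pos[OF assms(3,4), of 1] Apos assms(2) by (intro ge_one_powr_ge_zero) auto
    show "\<alpha>0 k \<le> \<alpha>0 (Suc k)" for k unfolding \<alpha>0_def
      using aa_mono[OF assms(3,4), of k "Suc k"] Apos assms(2)
      by (intro powr_mono divide_right_mono) auto
    have "\<alpha>0 (d - 1) \<le> \<alpha>0 d" unfolding \<alpha>0_def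
      using aa_mono[OF assms(3,4), of "d-1" d] Apos assms(2)
      by (intro powr_mono divide_right_mono) auto
    then show "\<alpha>0 (d - 1) \<le> B" using a0d by simp
  qed
  have lna0: "ln (\<alpha>0 j) = aa s j / A * L" for j unfolding \<alpha>0_def L_def by (simp add: ln_powr)
  have m0: "mterm d B s \<alpha>0 k = v" if k: "k \<in> {1..d}" for k
  proof -
    have "ln (mterm d B s \<alpha>0 k) = - (L / A)"
    proof (cases "k = 1")
      case True
      have "s * aa s 1 = 1" using assms(3) by simp
      then show ?thesis using ln_mterm(1)[OF adm0 assms(1,2) k, where s=s] True Apos assms(3)
        unfolding upd lna0 by (simp add: field_simps)
    next
      case False
      then have kk: "k = Suc (k - 1)" using k by auto
      have e: "s * aa s k = (1 - s) * aa s (k-1) + real k"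
        using aa_Suc_eq[OF assms(3), of "k-1"] kk by simp
      have "ln (mterm d B s \<alpha>0 k) = ((1-s) * (aa s (k-1) / A * L) - (s * aa s k) / A * L) / real k"
        using ln_mterm(1)[OF adm0 assms(1,2) k, where s=s] False unfolding upd lna0 by simp
      also have "\<dots> = - (L / A)" unfolding e using Apos k by (simp add: field_simps)
      finally show ?thesis .
    qed
    then have "ln (mterm d B s \<alpha>0 k) = ln v" using lnv by simp
    then show ?thesis using ln_mterm(2)[OF adm0 assms(1,2) k] vpos by simp
  qed
  have img: "(\<lambda>k. mterm d B s \<alpha>0 k) ` {1..d} = {v}" using m0 assms(1) by force
  have mv0: "minval d B s \<alpha>0 = v" unfolding minval_def img by simp
  have P1: "(SUP \<alpha>\<in>{\<alpha>. admissible d B \<alpha>}. minval d B s \<alpha>) = v"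
    by (rule cSup_eq_maximum) (use adm0 mv0 bound in auto)
  have P2: "\<exists>\<alpha>. admissible d B \<alpha> \<and> (\<forall>k\<in>{1..d}. mterm d B s \<alpha> k = minval d B s \<alpha>)"
    using adm0 m0 mv0 by auto
  have P3: "minval d B s \<alpha> = v"
    if adm: "admissible d B \<alpha>" and eq: "\<forall>k\<in>{1..d}. mterm d B s \<alpha> k = minval d B s \<alpha>" for \<alpha>
  proof -
    define m where "m = minval d B s \<alpha>"
    have one: "1 \<in> {1..d}" using assms(1) by simp
    have mpos: "m > 0" using ln_mterm(2)[OF adm assms(1,2) one, where s=s] bspec[OF eq one] unfolding m_def by simp
    define y where "y = (\<lambda>j. ln ((\<alpha>(d := B)) j))"
    have "\<forall>j\<in>{1..d}. (if j = 1 then - s * y 1 else ((1-s) * y (j-1) - s * y j) / real j) = - (- ln m)"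
    proof
      fix j assume j: "j \<in> {1..d}"
      show "(if j = 1 then - s * y 1 else ((1-s) * y (j-1) - s * y j) / real j) = - (- ln m)"
        using ln_mterm(1)[OF adm assms(1,2) j, where s=s] bspec[OF eq j] unfolding y_def m_def by simp
    qed
    from eq_aux[OF assms(3,4) this] assms(1) have "y d = - ln m * A" unfolding A_def by simp
    then have "L = - ln m * A" unfolding y_def L_def by simp
    then have "ln m = ln v" using lnv Apos by (simp add: field_simps)
    then show ?thesis using mpos vpos unfolding m_def by simp
  qed
  show ?thesis using P1 P2 P3 unfolding v_def by blast
qed

end
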